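(* Let $V_0$ be a smooth function on an interval, $H_0=-\big(\frac{\mathrm d^2}{\mathrm dz^2}+V_0\big)$, and let $\psi_1,\dots,\psi_{N+1}$ be smooth functions with $H_0\psi_1=0$ and $H_0\psi_{j+1}=C_j\psi_j$ for $1\le j\le N$, where $C_j$ are nonzero constants. Set $\theta_0=1$, $\theta_j=Wr(\psi_1,\dots,\psi_j)$, and assume $\theta_j$ has no zeros for $1\le j\le N+1$. Then for each $1\le n\le N$, with $V_n=V_0+2(\log\theta_n)''$, both $\phi_n=\theta_{n+1}/\theta_n$ and $\phi_{n-1}^{-1}=\theta_{n-1}/\theta_n$ are annihilated by $\frac{\mathrm d^2}{\mathrm dz^2}+V_n$, and $$Wr(\phi_n,\phi_{n-1}^{-1})=C_n,\quad\text{equivalently}\quad \theta_{n-1}'\theta_{n+1}-\theta_{n-1}\theta_{n+1}'=C_n\,\theta_n^2 .$$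
   Context: $Wr(f_1,\dots,f_n)=\det\big(\frac{\mathrm d^{i-1}f_j}{\mathrm dz^{i-1}}\big)_{i,j=1}^n$ is the Wronskian and $'=\mathrm d/\mathrm dz$. *)

theory Defs
  imports "HOL-Analysis.Analysis" "Jordan_Normal_Form.Determinant"
begin

definition smooth_on :: "real set \<Rightarrow> (real \<Rightarrow> real) \<Rightarrow> bool" where
  "smooth_on I f \<longleftrightarrow> (\<forall>k. \<forall>x\<in>I. ((deriv ^^ k) f) differentiable (at x))"

definition Wr :: "(real \<Rightarrow> real) list \<Rightarrow> real \<Rightarrow> real" where
  "Wr fs z = det (Matrix.mat (length fs) (length fs) (\<lambda>(i,j). (deriv ^^ i) (fs ! j) z))"

end

theory Submission
  imports Defs
begin

lemma DL:
  assumes "open I" "\<forall>x\<in>I. f x = g x"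
  shows "\<forall>x\<in>I. (deriv^^k) f x = (deriv^^k) g x"
proof (induction k)
  case 0 then show ?case using assms by simp
next
  case (Suc k)
  show ?case
  proof
    fix x assume x: "x \<in> I"
    have ev: "eventually (\<lambda>y. (deriv^^k) f y = (deriv^^k) g y) (nhds x)"
      using eventually_nhds_in_open[OF assms(1) x]
      by (rule eventually_mono) (use Suc.IH in auto)
    show "(deriv^^Suc k) f x = (deriv^^Suc k) g x"
      using deriv_cong_ev[OF ev refl] by simp
  qed
qed

lemma deriv_loc:
  assumes "open I" "\<forall>x\<in>I. f x = g x" "x \<in> I"
  shows "deriv f x = deriv g x"
  using DL[OF assms(1,2), of 1] assms(3) by simp

lemma diff_cong:
  assumes "open I" "x \<in> I" "\<forall>y\<in>I. f y = g y" "f differentiable at x"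
  shows "g differentiable at x"
  using assms unfolding differentiable_def
  by (metis has_derivative_transform_within_open)

lemma sm_D: "smooth_on I f \<Longrightarrow> x \<in> I \<Longrightarrow> (deriv^^k) f differentiable at x"
  unfolding smooth_on_def by blast

lemma sm_D0: "smooth_on I f \<Longrightarrow> x \<in> I \<Longrightarrow> f differentiable at x"
  using sm_D[of I f x 0] by simp

lemma sm_cong:
  assumes "open I" "\<forall>x\<in>I. f x = g x" "smooth_on I f"
  shows "smooth_on I g"
  unfolding smooth_on_def
proof (intro allI ballI)
  fix k x assume x: "x \<in> I"
  show "(deriv^^k) g differentiable at x"
    using diff_cong[OF assms(1) x DL[OF assms(1,2), of k]] sm_D[OF assms(3) x] by blast
qed

lemma funpow_deriv_Suc: "(deriv^^Suc k) f = (deriv^^k) (deriv f)"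
  by (simp only: funpow_Suc_right o_def)

lemma sm_deriv: "smooth_on I f \<Longrightarrow> smooth_on I (deriv f)"
  unfolding smooth_on_def by (metis funpow_deriv_Suc)

lemma sm_higher: "smooth_on I f \<Longrightarrow> smooth_on I ((deriv^^k) f)"
  by (induction k) (auto intro: sm_deriv)

lemma sm_intro:
  assumes "\<forall>x\<in>I. f differentiable at x" "smooth_on I (deriv f)"
  shows "smooth_on I f"
  unfolding smooth_on_def
proof (intro allI ballI)
  fix k x assume x: "x \<in> I"
  show "(deriv^^k) f differentiable at x"
    using assms x by (cases k) (auto simp: funpow_deriv_Suc smooth_on_def simp del: funpow.simps)
qed

lemma rd: fixes f :: "real \<Rightarrow> real" shows "f differentiable at x \<Longrightarrow> (f has_real_derivative deriv f x) (at x)"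
  using DERIV_deriv_iff_real_differentiable by blast

lemma deriv_add': fixes f g :: "real \<Rightarrow> real" assumes "f differentiable at x" "g differentiable at x" shows
   "deriv (\<lambda>x. f x + g x) x = deriv f x + deriv g x"
  using DERIV_imp_deriv[OF DERIV_add[OF rd[OF assms(1)] rd[OF assms(2)]]] .

lemma deriv_mult': fixes f g :: "real \<Rightarrow> real" assumes "f differentiable at x" "g differentiable at x" shows
   "deriv (\<lambda>x. f x * g x) x = deriv f x * g x + f x * deriv g x"
  using DERIV_imp_deriv[OF DERIV_mult[OF rd[OF assms(1)] rd[OF assms(2)]]] by (simp add: mult.commute)

lemma sm_DERIV: "smooth_on I f \<Longrightarrow> x \<in> I \<Longrightarrow> (f has_real_derivative deriv f x) (at x)"
  using sm_D0 DERIV_deriv_iff_real_differentiable by blast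

definition ck :: "nat \<Rightarrow> real set \<Rightarrow> (real \<Rightarrow> real) \<Rightarrow> bool" where
  "ck n I f \<longleftrightarrow> (\<forall>k\<le>n. \<forall>x\<in>I. (deriv^^k) f differentiable (at x))"

lemma ck_0: "ck 0 I f \<longleftrightarrow> (\<forall>x\<in>I. f differentiable at x)"
  unfolding ck_def by auto

lemma ck_Suc: "ck (Suc n) I f \<longleftrightarrow> (\<forall>x\<in>I. f differentiable at x) \<and> ck n I (deriv f)"
proof
  assume a: "ck (Suc n) I f"
  then have "\<forall>x\<in>I. f differentiable at x" unfolding ck_def by (metis funpow_0 le0)
  moreover have "ck n I (deriv f)" unfolding ck_def
  proof (intro allI impI)
    fix k assume "k \<le> n" then have "Suc k \<le> Suc n" by simp
    then have "\<forall>x\<in>I. (deriv ^^ Suc k) f differentiable at x"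
      using a unfolding ck_def by blast
    then show "\<forall>x\<in>I. (deriv ^^ k) (deriv f) differentiable at x"
      by (simp only: funpow_deriv_Suc)
  qed
  ultimately show "(\<forall>x\<in>I. f differentiable at x) \<and> ck n I (deriv f)" by blast
next
  assume a: "(\<forall>x\<in>I. f differentiable at x) \<and> ck n I (deriv f)"
  show "ck (Suc n) I f" unfolding ck_def
  proof (intro allI impI)
    fix k assume k: "k \<le> Suc n"
    show "\<forall>x\<in>I. (deriv ^^ k) f differentiable at x"
    proof (cases k)
      case 0 then show ?thesis using a by simp
    next
      case (Suc m) then have "m \<le> n" using k by simp
      then have "\<forall>x\<in>I. (deriv ^^ m) (deriv f) differentiable at x" using a unfolding ck_def by blast
      then show ?thesis unfolding Suc by (simp only: funpow_deriv_Suc)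
    qed
  qed
qed

lemma ck_mono: "ck (Suc n) I f \<Longrightarrow> ck n I f"
  unfolding ck_def by auto

lemma sm_ck: "smooth_on I f \<longleftrightarrow> (\<forall>n. ck n I f)"
  unfolding smooth_on_def ck_def by auto

lemma ck_cong:
  assumes "open I" "\<forall>x\<in>I. f x = g x" "ck n I f"
  shows "ck n I g"
  unfolding ck_def
proof (intro allI impI ballI)
  fix k x assume "k \<le> n" and x: "x \<in> I"
  then show "(deriv^^k) g differentiable at x"
    using diff_cong[OF assms(1) x DL[OF assms(1,2), of k]] assms(3) unfolding ck_def by blast
qed

lemma ck_const: "ck n I (\<lambda>x. c)"
proof (induction n arbitrary: c)
  case 0 then show ?case by (simp add: ck_0)
next
  case (Suc n)
  have "deriv (\<lambda>x. c) = (\<lambda>x. 0)" by (simp add: fun_eq_iff)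
  then show ?case using Suc by (simp add: ck_Suc)
qed

lemma ck_add:
  assumes "open I" shows "ck n I f \<Longrightarrow> ck n I g \<Longrightarrow> ck n I (\<lambda>x. f x + g x)"
proof (induction n arbitrary: f g)
  case 0 then show ?case by (auto simp: ck_0)
next
  case (Suc n)
  have d: "\<forall>x\<in>I. f differentiable at x" "\<forall>x\<in>I. g differentiable at x"
    using Suc.prems by (auto simp: ck_Suc)
  have "\<forall>x\<in>I. deriv f x + deriv g x = deriv (\<lambda>x. f x + g x) x"
    using d by (auto intro!: deriv_add'[symmetric])
  moreover have "ck n I (\<lambda>x. deriv f x + deriv g x)"
    using Suc by (auto simp: ck_Suc)
  ultimately have "ck n I (deriv (\<lambda>x. f x + g x))" by (rule ck_cong[OF assms])
  moreover have "\<forall>x\<in>I. (\<lambda>x. f x + g x) differentiable at x" using d by auto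
  ultimately show ?case by (simp only: ck_Suc)
qed

lemma ck_mult:
  assumes "open I" shows "ck n I f \<Longrightarrow> ck n I g \<Longrightarrow> ck n I (\<lambda>x. f x * g x)"
proof (induction n arbitrary: f g)
  case 0 then show ?case by (auto simp: ck_0)
next
  case (Suc n)
  have d: "\<forall>x\<in>I. f differentiable at x" "\<forall>x\<in>I. g differentiable at x"
    using Suc.prems by (auto simp: ck_Suc)
  have "\<forall>x\<in>I. deriv f x * g x + f x * deriv g x = deriv (\<lambda>x. f x * g x) x"
    using d by (auto intro!: deriv_mult'[symmetric])
  moreover have "ck n I (\<lambda>x. deriv f x * g x + f x * deriv g x)"
  proof -
    have a: "ck n I (deriv f)" "ck n I g" "ck n I f" "ck n I (deriv g)"
      using Suc.prems ck_mono by (auto simp: ck_Suc)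
    show ?thesis using ck_add[OF assms Suc.IH[OF a(1,2)] Suc.IH[OF a(3,4)]] .
  qed
  ultimately have "ck n I (deriv (\<lambda>x. f x * g x))" by (rule ck_cong[OF assms])
  moreover have "\<forall>x\<in>I. (\<lambda>x. f x * g x) differentiable at x" using d by auto
  ultimately show ?case by (simp only: ck_Suc)
qed

lemma inv_diff: fixes f :: "real \<Rightarrow> real"
  assumes "f differentiable at x" "f x \<noteq> 0" shows "(\<lambda>x. 1 / f x) differentiable at x"
  by (rule differentiable_divide) (use assms in auto)

lemma inv_deriv: fixes f :: "real \<Rightarrow> real"
  assumes "f differentiable at x" "f x \<noteq> 0"
  shows "deriv (\<lambda>x. 1 / f x) x = (- 1) * (deriv f x * (1 / f x * (1 / f x)))"
proof -
  have "((\<lambda>x. 1 / f x) has_real_derivative (0 * f x - deriv f x * 1) / (f x ^ Suc (Suc 0))) (at x)"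
    by (rule DERIV_quotient[OF DERIV_const rd[OF assms(1)] assms(2)])
  from DERIV_imp_deriv[OF this] show ?thesis using assms(2) by (simp add: field_simps power2_eq_square)
qed

lemma ck_inv:
  assumes "open I" shows "\<forall>x\<in>I. f x \<noteq> 0 \<Longrightarrow> ck n I f \<Longrightarrow> ck n I (\<lambda>x. 1 / f x)"
proof (induction n arbitrary: f)
  case 0 then show ?case unfolding ck_0 using inv_diff by blast
next
  case (Suc n)
  have d: "\<forall>x\<in>I. f differentiable at x" using Suc.prems by (auto simp: ck_Suc)
  have "\<forall>x\<in>I. (- 1) * (deriv f x * (1 / f x * (1 / f x))) = deriv (\<lambda>x. 1 / f x) x"
    using inv_deriv d Suc.prems(1) by metis
  moreover have "ck n I (\<lambda>x. (- 1) * (deriv f x * (1 / f x * (1 / f x))))"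
  proof -
    have a: "ck n I (deriv f)" "ck n I f" using Suc.prems ck_mono by (auto simp: ck_Suc)
    have "ck n I (\<lambda>x. 1 / f x)" using Suc.IH[OF Suc.prems(1) a(2)] .
    then have "ck n I (\<lambda>x. 1 / f x * (1 / f x))" using ck_mult[OF assms] by blast
    then have "ck n I (\<lambda>x. deriv f x * (1 / f x * (1 / f x)))" using ck_mult[OF assms a(1)] by blast
    then show ?thesis using ck_mult[OF assms ck_const] by blast
  qed
  ultimately have "ck n I (deriv (\<lambda>x. 1 / f x))" by (rule ck_cong[OF assms])
  moreover have "\<forall>x\<in>I. (\<lambda>x. 1 / f x) differentiable at x"
    using d Suc.prems(1) inv_diff by blast
  ultimately show ?case by (simp only: ck_Suc)
qed

lemma sm_const: "smooth_on I (\<lambda>x. c)"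
  unfolding sm_ck using ck_const by blast

lemma sm_add: "open I \<Longrightarrow> smooth_on I f \<Longrightarrow> smooth_on I g \<Longrightarrow> smooth_on I (\<lambda>x. f x + g x)"
  unfolding sm_ck using ck_add by blast

lemma sm_mult: "open I \<Longrightarrow> smooth_on I f \<Longrightarrow> smooth_on I g \<Longrightarrow> smooth_on I (\<lambda>x. f x * g x)"
  unfolding sm_ck using ck_mult by blast

lemma sm_inv: "open I \<Longrightarrow> smooth_on I f \<Longrightarrow> \<forall>x\<in>I. f x \<noteq> 0 \<Longrightarrow> smooth_on I (\<lambda>x. 1 / f x)"
  unfolding sm_ck using ck_inv by blast

lemma sm_cmult: "open I \<Longrightarrow> smooth_on I f \<Longrightarrow> smooth_on I (\<lambda>x. c * f x)"
  using sm_mult[OF _ sm_const] by blast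

lemma sm_minus: "open I \<Longrightarrow> smooth_on I f \<Longrightarrow> smooth_on I (\<lambda>x. - f x)"
  using sm_cmult[of I f "-1"] by simp

lemma sm_diff: "open I \<Longrightarrow> smooth_on I f \<Longrightarrow> smooth_on I g \<Longrightarrow> smooth_on I (\<lambda>x. f x - g x)"
  using sm_add[OF _ _ sm_minus, of I f g] by simp

lemma sm_div: "open I \<Longrightarrow> smooth_on I f \<Longrightarrow> smooth_on I g \<Longrightarrow> \<forall>x\<in>I. g x \<noteq> 0 \<Longrightarrow> smooth_on I (\<lambda>x. f x / g x)"
  using sm_mult[OF _ _ sm_inv, of I f g] by simp

lemma sm_sum: assumes "open I" shows "finite S \<Longrightarrow> (\<And>i. i \<in> S \<Longrightarrow> smooth_on I (F i)) \<Longrightarrow> smooth_on I (\<lambda>x. \<Sum>i\<in>S. F i x)"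
proof (induction S rule: finite_induct)
  case empty then show ?case using sm_const by simp
next
  case (insert a S) then show ?case using sm_add[OF assms, of "F a" "\<lambda>x. \<Sum>i\<in>S. F i x"] by simp
qed

lemma sm_prod: assumes "open I" shows "finite S \<Longrightarrow> (\<And>i. i \<in> S \<Longrightarrow> smooth_on I (F i)) \<Longrightarrow> smooth_on I (\<lambda>x. \<Prod>i\<in>S. F i x)"
proof (induction S rule: finite_induct)
  case empty then show ?case using sm_const by simp
next
  case (insert a S) then show ?case using sm_mult[OF assms, of "F a" "\<lambda>x. \<Prod>i\<in>S. F i x"] by simp
qed

lemma ln_abs_sq: "ln \<bar>y::real\<bar> = ln (y^2) / 2"
proof (cases "y = 0")
  case True then show ?thesis by simp
next
  case False
  have a: "0 < \<bar>y\<bar>" using False by simp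
  have "ln (y^2) = ln (\<bar>y\<bar> * \<bar>y\<bar>)" by (simp only: abs_mult_self_eq power2_eq_square)
  also have "\<dots> = 2 * ln \<bar>y\<bar>" by (simp only: ln_mult) (use False in simp)
  finally show ?thesis by simp
qed

lemma ln_abs_DERIV:
  fixes f :: "real \<Rightarrow> real"
  assumes "f differentiable at x" "f x \<noteq> 0"
  shows "((\<lambda>x. ln \<bar>f x\<bar>) has_real_derivative deriv f x / f x) (at x)"
proof -
  have p: "0 < (f x)^2" using assms(2) by simp
  have d1: "((\<lambda>x. (f x)^2) has_real_derivative 2 * f x * deriv f x) (at x)"
  proof -
    have "((\<lambda>x. f x * f x) has_real_derivative deriv f x * f x + deriv f x * f x) (at x)"
      using DERIV_mult[OF rd[OF assms(1)] rd[OF assms(1)]] .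
    then show ?thesis by (simp add: power2_eq_square algebra_simps)
  qed
  have d2: "((\<lambda>x. ln ((f x)^2)) has_real_derivative 1 / (f x)^2 * (2 * f x * deriv f x)) (at x)"
    using DERIV_chain2[where f=ln and g="\<lambda>x. (f x)^2", OF DERIV_ln_divide[OF p] d1] .
  have "((\<lambda>x. ln ((f x)^2) / 2) has_real_derivative (1 / (f x)^2 * (2 * f x * deriv f x)) / 2) (at x)"
    using DERIV_cdivide[OF d2, of 2] .
  moreover have "(1 / (f x)^2 * (2 * f x * deriv f x)) / 2 = deriv f x / f x"
    using assms(2) by (simp add: field_simps power2_eq_square)
  ultimately show ?thesis unfolding ln_abs_sq by simp
qed

lemma sm_ln_abs:
  assumes "open I" "smooth_on I f" "\<forall>x\<in>I. f x \<noteq> 0"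
  shows "smooth_on I (\<lambda>x. ln \<bar>f x\<bar>)" "\<forall>x\<in>I. deriv (\<lambda>x. ln \<bar>f x\<bar>) x = deriv f x / f x"
proof -
  show d: "\<forall>x\<in>I. deriv (\<lambda>x. ln \<bar>f x\<bar>) x = deriv f x / f x"
    using ln_abs_DERIV[OF sm_D0[OF assms(2)]] assms(3) DERIV_imp_deriv by blast
  have s1: "smooth_on I (\<lambda>x. deriv f x / f x)" using sm_div[OF assms(1) sm_deriv[OF assms(2)] assms(2,3)] .
  have s2: "\<forall>x\<in>I. deriv f x / f x = deriv (\<lambda>x. ln \<bar>f x\<bar>) x" using d by simp
  have "smooth_on I (deriv (\<lambda>x. ln \<bar>f x\<bar>))" using sm_cong[OF assms(1) s2 s1] .
  moreover have "\<forall>x\<in>I. (\<lambda>x. ln \<bar>f x\<bar>) differentiable at x"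
    using ln_abs_DERIV[OF sm_D0[OF assms(2)]] assms(3) real_differentiable_def by blast
  ultimately show "smooth_on I (\<lambda>x. ln \<bar>f x\<bar>)" using sm_intro by blast
qed

lemma Suc_choose': "Suc n choose k = (n choose k) + (if k = 0 then 0 else (n choose (k-1)))"
  by (cases k) auto

lemma leibniz:
  fixes f g :: "real \<Rightarrow> real"
  assumes "open I" "smooth_on I f" "smooth_on I g" and z: "z \<in> I"
  shows "(deriv ^^ n) (\<lambda>w. f w * g w) z =
           (\<Sum>i = 0..n. of_nat (n choose i) * (deriv ^^ i) f z * (deriv ^^ (n-i)) g z)"
using z
proof (induction n arbitrary: z)
  case 0 then show ?case by simp
next
  case (Suc n z)
  have *: "\<And>n. ((deriv ^^ n) f has_field_derivative deriv ((deriv ^^ n) f) z) (at z)"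
          "\<And>n. ((deriv ^^ n) g has_field_derivative deriv ((deriv ^^ n) g) z) (at z)"
    using Suc.prems assms rd sm_D by blast+
  have sumeq: "(\<Sum>i = 0..n.
               of_nat (n choose i) * (deriv ((deriv ^^ i) f) z * (deriv ^^ (n-i)) g z + deriv ((deriv ^^ (n-i)) g) z * (deriv ^^ i) f z)) =
            g z * deriv ((deriv ^^ n) f) z + (\<Sum>i = 0..n. (deriv ^^ i) f z * (of_nat (Suc n choose i) * (deriv ^^ (Suc n - i)) g z))"
    apply (simp add: Suc_choose' algebra_simps sum.distrib)
    apply (subst (4) sum_Suc_reindex)
    apply (auto simp: algebra_simps Suc_diff_le intro: sum.cong)
    done
  have "((deriv ^^ n) (\<lambda>w. f w * g w) has_field_derivative
         (\<Sum>i = 0..Suc n. (Suc n choose i) * (deriv ^^ i) f z * (deriv ^^ (Suc n - i)) g z))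
        (at z)"
    apply (rule has_field_derivative_transform_within_open
        [of "\<lambda>w. (\<Sum>i = 0..n. of_nat (n choose i) * (deriv ^^ i) f w * (deriv ^^ (n-i)) g w)" _ _ I])
       apply (simp add: algebra_simps)
       apply (rule derivative_eq_intros | simp)+
           apply (auto intro: DERIV_mult * \<open>open I\<close> Suc.prems Suc.IH [symmetric])
    by (metis (no_types, lifting) mult.commute sum.cong sumeq)
  then show ?case
    unfolding funpow.simps o_apply
    by (simp add: DERIV_imp_deriv)
qed

definition WM :: "(real \<Rightarrow> real) list \<Rightarrow> real \<Rightarrow> real mat" where
  "WM fs z = Matrix.mat (length fs) (length fs) (\<lambda>(i,j). (deriv^^i) (fs!j) z)"

lemma Wr_WM: "Wr fs z = det (WM fs z)" by (simp add: Wr_def WM_def)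

lemma WM_carrier: "WM fs z \<in> carrier_mat (length fs) (length fs)" by (simp add: WM_def)

lemma WM_index: "i < length fs \<Longrightarrow> j < length fs \<Longrightarrow> WM fs z $$ (i,j) = (deriv^^i) (fs!j) z"
  by (simp add: WM_def)

lemma Wr_cong:
  assumes "open I" "z \<in> I" "length fs = length gs" "\<forall>j<length fs. \<forall>x\<in>I. (fs!j) x = (gs!j) x"
  shows "Wr fs z = Wr gs z"
proof -
  have e: "\<And>i j. j < length fs \<Longrightarrow> (deriv^^i) (fs!j) z = (deriv^^i) (gs!j) z"
    using DL[OF assms(1)] assms(2,4) by blast
  have "WM fs z = WM gs z"
    by (rule eq_matI) (use assms(3) e in \<open>auto simp: WM_def\<close>)
  then show ?thesis by (simp add: Wr_WM)
qed

lemma Wr_sum_form: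
  "Wr fs z = (\<Sum>p\<in>{p. p permutes {0..<length fs}}. signof p * (\<Prod>i=0..<length fs. (deriv^^i) (fs ! p i) z))"
proof -
  have "Wr fs z = (\<Sum>p\<in>{p. p permutes {0..<length fs}}. signof p * (\<Prod>i=0..<length fs. WM fs z $$ (i, p i)))"
    unfolding Wr_WM by (rule det_def'[OF WM_carrier])
  also have "\<dots> = (\<Sum>p\<in>{p. p permutes {0..<length fs}}. signof p * (\<Prod>i=0..<length fs. (deriv^^i) (fs ! p i) z))"
  proof (rule sum.cong[OF refl])
    fix p assume "p \<in> {p. p permutes {0..<length fs}}"
    then have p: "p permutes {0..<length fs}" by simp
    have "(\<Prod>i=0..<length fs. WM fs z $$ (i, p i)) = (\<Prod>i=0..<length fs. (deriv^^i) (fs ! p i) z)"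
    proof (rule prod.cong[OF refl])
      fix i assume "i \<in> {0..<length fs}"
      moreover then have "p i \<in> {0..<length fs}" using permutes_in_image[OF p] by blast
      ultimately show "WM fs z $$ (i, p i) = (deriv^^i) (fs ! p i) z" by (simp add: WM_index)
    qed
    then show "signof p * (\<Prod>i=0..<length fs. WM fs z $$ (i, p i)) = signof p * (\<Prod>i=0..<length fs. (deriv^^i) (fs ! p i) z)"
      by simp
  qed
  finally show ?thesis .
qed

lemma sm_Wr:
  assumes "open I" "\<forall>f\<in>set fs. smooth_on I f"
  shows "smooth_on I (Wr fs)"
proof -
  let ?P = "{p. p permutes {0..<length fs}}"
  have "smooth_on I (\<lambda>z. \<Sum>p\<in>?P. signof p * (\<Prod>i=0..<length fs. (deriv^^i) (fs ! p i) z))"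
  proof (rule sm_sum[OF assms(1)])
    show "finite ?P" by (rule finite_permutations) simp
  next
    fix p assume "p \<in> ?P"
    then have p: "p permutes {0..<length fs}" by simp
    have "smooth_on I (\<lambda>z. \<Prod>i=0..<length fs. (deriv^^i) (fs ! p i) z)"
    proof (rule sm_prod[OF assms(1)])
      fix i assume "i \<in> {0..<length fs}"
      then have "p i \<in> {0..<length fs}" using permutes_in_image[OF p] by blast
      then have "fs ! p i \<in> set fs" by simp
      then show "smooth_on I ((deriv^^i) (fs ! p i))" using sm_higher assms(2) by blast
    qed simp
    then show "smooth_on I (\<lambda>z. signof p * (\<Prod>i=0..<length fs. (deriv^^i) (fs ! p i) z))"
      using sm_cmult[OF assms(1)] by blast
  qed
  moreover have "(\<lambda>z. \<Sum>p\<in>?P. signof p * (\<Prod>i=0..<length fs. (deriv^^i) (fs ! p i) z)) = Wr fs"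
    by (rule ext) (simp only: Wr_sum_form)
  ultimately show ?thesis by simp
qed

lemma const_higher: "(deriv^^Suc k) (\<lambda>x. c::real) = (\<lambda>x. 0)"
proof (induction k arbitrary: c)
  case 0
  have "deriv (\<lambda>x. c) = (\<lambda>x::real. 0::real)" by (rule ext) (rule DERIV_imp_deriv, rule DERIV_const)
  then show ?case by simp
next
  case (Suc k)
  have "deriv (\<lambda>x. c) = (\<lambda>x::real. 0::real)" by (rule ext) (rule DERIV_imp_deriv, rule DERIV_const)
  then have "(deriv^^Suc (Suc k)) (\<lambda>x. c) = (deriv^^Suc k) (\<lambda>x. 0)"
    by (simp only: funpow_deriv_Suc[of "Suc k"])
  then show ?case using Suc by simp
qed

lemma Wr_Nil: "Wr [] z = 1"
  unfolding Wr_WM by (rule det_dim_zero) (use WM_carrier[of "[]"] in simp)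

lemma Wr_single: "Wr [f] z = f z"
proof -
  have c: "WM [f] z \<in> carrier_mat 1 1" using WM_carrier[of "[f]" z] by simp
  show ?thesis unfolding Wr_WM det_single[OF c] by (simp add: WM_index)
qed

lemma Wr_one_cons: "Wr ((\<lambda>x. 1) # gs) z = Wr (map deriv gs) z"
proof -
  let ?A = "WM ((\<lambda>x. 1) # gs) z"
  let ?n = "length gs"
  have A: "?A \<in> carrier_mat (Suc ?n) (Suc ?n)" using WM_carrier[of "(\<lambda>x. 1) # gs" z] by simp
  have "det ?A = (\<Sum>i<Suc ?n. ?A $$ (i,0) * cofactor ?A i 0)"
    by (rule laplace_expansion_column[OF A]) simp
  also have "\<dots> = ?A $$ (0,0) * cofactor ?A 0 0 + (\<Sum>i<?n. ?A $$ (Suc i,0) * cofactor ?A (Suc i) 0)"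
    by (rule sum.lessThan_Suc_shift)
  also have "(\<Sum>i<?n. ?A $$ (Suc i,0) * cofactor ?A (Suc i) 0) = 0"
  proof (rule sum.neutral, intro ballI)
    fix i assume "i \<in> {..<?n}"
    then have "?A $$ (Suc i,0) = (deriv^^Suc i) (\<lambda>x. 1) z" by (simp add: WM_index)
    then show "?A $$ (Suc i,0) * cofactor ?A (Suc i) 0 = 0" by (simp only: const_higher)
  qed
  also have "?A $$ (0,0) = 1" by (simp add: WM_index)
  also have "cofactor ?A 0 0 = det (WM (map deriv gs) z)"
  proof -
    have "mat_delete ?A 0 0 = WM (map deriv gs) z"
    proof (rule eq_matI)
      fix i j assume "i < dim_row (WM (map deriv gs) z)" "j < dim_col (WM (map deriv gs) z)"
      then have ij: "i < ?n" "j < ?n" using WM_carrier[of "map deriv gs" z] by auto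
      have "mat_delete ?A 0 0 $$ (i,j) = ?A $$ (Suc i, Suc j)"
        unfolding mat_delete_def using ij A by auto
      also have "\<dots> = (deriv^^Suc i) (gs ! j) z" using ij by (simp add: WM_index)
      also have "\<dots> = (deriv^^i) (deriv (gs ! j)) z" by (simp only: funpow_deriv_Suc)
      also have "\<dots> = WM (map deriv gs) z $$ (i,j)" using ij by (simp add: WM_index)
      finally show "mat_delete ?A 0 0 $$ (i,j) = WM (map deriv gs) z $$ (i,j)" .
    qed (use A WM_carrier[of "map deriv gs" z] in auto)
    then show ?thesis unfolding cofactor_def by simp
  qed
  finally show ?thesis unfolding Wr_WM by simp
qed

lemma quot_deriv:
  fixes f g :: "real \<Rightarrow> real"
  assumes "f differentiable at x" "g differentiable at x" "g x \<noteq> 0"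
  shows "deriv (\<lambda>x. f x / g x) x = (deriv f x * g x - f x * deriv g x) / (g x)^2"
proof -
  have "((\<lambda>x. f x / g x) has_real_derivative (deriv f x * g x - (deriv g x * f x)) / (g x ^ Suc (Suc 0))) (at x)"
    by (rule DERIV_quotient[OF rd[OF assms(1)] rd[OF assms(2)] assms(3)])
  from DERIV_imp_deriv[OF this] show ?thesis by (simp add: power2_eq_square mult.commute)
qed

lemma Wr_mult:
  assumes I: "open I" "z \<in> I" and h: "smooth_on I h" and gs: "\<forall>g\<in>set gs. smooth_on I g"
  shows "Wr (map (\<lambda>g x. h x * g x) gs) z = h z ^ length gs * Wr gs z"
proof -
  define n where "n = length gs"
  define L where "L = Matrix.mat n n (\<lambda>(i,l). if l \<le> i then of_nat (i choose l) * (deriv^^(i-l)) h z else 0)"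
  have Lc: "L \<in> carrier_mat n n" by (simp add: L_def)
  have Gc: "WM gs z \<in> carrier_mat n n" using WM_carrier n_def by simp
  have Mc: "WM (map (\<lambda>g x. h x * g x) gs) z \<in> carrier_mat n n" using WM_carrier n_def by (metis length_map)
  have M: "WM (map (\<lambda>g x. h x * g x) gs) z = L * WM gs z"
  proof (rule eq_matI)
    fix i j assume a: "i < dim_row (L * WM gs z)" "j < dim_col (L * WM gs z)"
    then have ij: "i < n" "j < n" using Lc Gc by auto
    have gj: "smooth_on I (gs ! j)" using gs ij n_def by simp
    have "WM (map (\<lambda>g x. h x * g x) gs) z $$ (i,j) = (deriv^^i) (\<lambda>x. h x * (gs!j) x) z"
      using ij n_def by (simp add: WM_index)
    also have "\<dots> = (deriv^^i) (\<lambda>x. (gs!j) x * h x) z" by (simp add: mult.commute)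
    also have "\<dots> = (\<Sum>l=0..i. of_nat (i choose l) * (deriv^^l) (gs!j) z * (deriv^^(i-l)) h z)"
      by (rule leibniz[OF I(1) gj h I(2)])
    also have "\<dots> = (\<Sum>l\<in>{0..<n}. L $$ (i,l) * WM gs z $$ (l,j))"
    proof -
      have "(\<Sum>l\<in>{0..<n}. L $$ (i,l) * WM gs z $$ (l,j)) = (\<Sum>l\<in>{0..<n}. if l \<le> i then of_nat (i choose l) * (deriv^^l) (gs!j) z * (deriv^^(i-l)) h z else 0)"
        by (rule sum.cong[OF refl]) (use ij n_def in \<open>auto simp: L_def WM_index\<close>)
      also have "\<dots> = (\<Sum>l\<in>{l\<in>{0..<n}. l \<le> i}. of_nat (i choose l) * (deriv^^l) (gs!j) z * (deriv^^(i-l)) h z)"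
        by (rule sum.inter_filter[symmetric]) simp
      also have "{l\<in>{0..<n}. l \<le> i} = {0..i}" using ij by auto
      finally show ?thesis by simp
    qed
    also have "\<dots> = (L * WM gs z) $$ (i,j)"
    proof -
      have "(L * WM gs z) $$ (i,j) = row L i \<bullet> col (WM gs z) j" using ij Lc Gc by simp
      also have "\<dots> = (\<Sum>l\<in>{0..<n}. L $$ (i,l) * WM gs z $$ (l,j))"
        unfolding scalar_prod_def using ij Lc Gc by (intro sum.cong) auto
      finally show ?thesis by simp
    qed
    finally show "WM (map (\<lambda>g x. h x * g x) gs) z $$ (i,j) = (L * WM gs z) $$ (i,j)" .
  qed (use Lc Gc Mc in auto)
  have dL: "det L = h z ^ n"
  proof -
    have "det L = prod_list (diag_mat L)" by (rule det_lower_triangular[OF _ Lc]) (simp add: L_def)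
    also have "\<dots> = (\<Prod>i=0..<n. L $$ (i,i))" using Lc by (simp add: prod_list_diag_prod)
    also have "\<dots> = (\<Prod>i=0..<n. h z)" by (rule prod.cong) (auto simp: L_def)
    finally show ?thesis by simp
  qed
  show ?thesis unfolding Wr_WM M det_mult[OF Lc Gc] dL n_def by simp
qed

lemma Wr_crum:
  assumes I: "open I" "z \<in> I" and f1: "smooth_on I f1" "\<forall>x\<in>I. f1 x \<noteq> 0"
    and gs: "\<forall>g\<in>set gs. smooth_on I g"
  shows "Wr (f1 # gs) z = f1 z * Wr (map (\<lambda>g x. deriv g x - deriv f1 x / f1 x * g x) gs) z"
proof -
  define q where "q = map (\<lambda>g x. g x / f1 x) gs"
  have qs: "\<forall>g\<in>set q. smooth_on I g" using gs sm_div[OF I(1) _ f1] by (auto simp: q_def)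
  have dqs: "\<forall>g\<in>set (map deriv q). smooth_on I g" using qs sm_deriv by auto
  have oq: "\<forall>g\<in>set ((\<lambda>x. 1) # q). smooth_on I g" using qs sm_const by auto
  have "Wr (f1 # gs) z = Wr (map (\<lambda>g x. f1 x * g x) ((\<lambda>x. 1) # q)) z"
  proof (rule Wr_cong[OF I])
    show "\<forall>j<length (f1 # gs). \<forall>x\<in>I. ((f1 # gs) ! j) x = (map (\<lambda>g x. f1 x * g x) ((\<lambda>x. 1) # q) ! j) x"
    proof (intro allI impI ballI)
      fix j x assume j: "j < length (f1 # gs)" and x: "x \<in> I"
      show "((f1 # gs) ! j) x = (map (\<lambda>g x. f1 x * g x) ((\<lambda>x. 1) # q) ! j) x"
      proof (cases j)
        case 0 then show ?thesis by simp
      next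
        case (Suc k) then show ?thesis using j x f1(2) by (simp add: q_def)
      qed
    qed
  qed (simp add: q_def)
  also have "\<dots> = f1 z ^ Suc (length gs) * Wr ((\<lambda>x. 1) # q) z"
    using Wr_mult[OF I f1(1) oq] by (simp add: q_def)
  also have "Wr ((\<lambda>x. 1) # q) z = Wr (map deriv q) z" by (rule Wr_one_cons)
  finally have L: "Wr (f1 # gs) z = f1 z ^ Suc (length gs) * Wr (map deriv q) z" .
  have "Wr (map (\<lambda>g x. deriv g x - deriv f1 x / f1 x * g x) gs) z = Wr (map (\<lambda>g x. f1 x * g x) (map deriv q)) z"
  proof (rule Wr_cong[OF I])
    show "\<forall>j<length (map (\<lambda>g x. deriv g x - deriv f1 x / f1 x * g x) gs). \<forall>x\<in>I.
      (map (\<lambda>g x. deriv g x - deriv f1 x / f1 x * g x) gs ! j) x = (map (\<lambda>g x. f1 x * g x) (map deriv q) ! j) x"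
    proof (intro allI impI ballI)
      fix j x assume j: "j < length (map (\<lambda>g x. deriv g x - deriv f1 x / f1 x * g x) gs)" and x: "x \<in> I"
      then have jj: "j < length gs" by simp
      have gd: "(gs ! j) differentiable at x" using sm_D0[of I "gs!j" x] gs jj x by simp
      have fd: "f1 differentiable at x" using f1 x sm_D0 by blast
      have "deriv (\<lambda>x. (gs ! j) x / f1 x) x = (deriv (gs!j) x * f1 x - (gs!j) x * deriv f1 x) / (f1 x)^2"
        by (rule quot_deriv[OF gd fd]) (use f1(2) x in auto)
      then show "(map (\<lambda>g x. deriv g x - deriv f1 x / f1 x * g x) gs ! j) x = (map (\<lambda>g x. f1 x * g x) (map deriv q) ! j) x"
        using jj f1(2) x by (simp add: q_def field_simps power2_eq_square)
    qed
  qed (simp add: q_def)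
  also have "\<dots> = f1 z ^ length gs * Wr (map deriv q) z" using Wr_mult[OF I f1(1) dqs] by (simp add: q_def)
  finally have R: "Wr (map (\<lambda>g x. deriv g x - deriv f1 x / f1 x * g x) gs) z = f1 z ^ length gs * Wr (map deriv q) z" .
  show ?thesis unfolding L R by simp
qed

lemma Wr_two: "Wr [f, g] z = f z * deriv g z - g z * deriv f z"
proof -
  let ?A = "WM [f, g] z"
  have A: "?A \<in> carrier_mat 2 2" using WM_carrier[of "[f,g]" z] by (simp add: numeral_2_eq_2)
  have "det ?A = (\<Sum>i<2. ?A $$ (i,0) * cofactor ?A i 0)"
    by (rule laplace_expansion_column[OF A]) simp
  also have "\<dots> = ?A $$ (0,0) * cofactor ?A 0 0 + ?A $$ (1,0) * cofactor ?A 1 0"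
    by (simp add: numeral_2_eq_2)
  also have "cofactor ?A 0 0 = deriv g z"
  proof -
    have c: "mat_delete ?A 0 0 \<in> carrier_mat 1 1" using mat_delete_carrier[OF A] by simp
    show ?thesis unfolding cofactor_def det_single[OF c] using A by (simp add: mat_delete_def WM_index)
  qed
  also have "cofactor ?A 1 0 = - g z"
  proof -
    have c: "mat_delete ?A 1 0 \<in> carrier_mat 1 1" using mat_delete_carrier[OF A] by simp
    show ?thesis unfolding cofactor_def det_single[OF c] using A by (simp add: mat_delete_def WM_index)
  qed
  finally show ?thesis unfolding Wr_WM by (simp add: WM_index)
qed

definition Aop :: "(real \<Rightarrow> real) \<Rightarrow> (real \<Rightarrow> real) \<Rightarrow> real \<Rightarrow> real" where
  "Aop p h = (\<lambda>x. deriv h x - deriv p x / p x * h x)"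

lemma sm_Aop: "open I \<Longrightarrow> smooth_on I p \<Longrightarrow> \<forall>x\<in>I. p x \<noteq> 0 \<Longrightarrow> smooth_on I h \<Longrightarrow> smooth_on I (Aop p h)"
  unfolding Aop_def
  by (intro sm_diff sm_mult sm_div sm_deriv) auto

lemma INT:
  fixes p V0 f g :: "real \<Rightarrow> real"
  assumes I: "open I" "x \<in> I" and V0: "smooth_on I V0" and p: "smooth_on I p" "\<forall>y\<in>I. p y \<noteq> 0"
    and Hp: "\<forall>y\<in>I. deriv (deriv p) y + V0 y * p y = 0"
    and f: "smooth_on I f" and g: "smooth_on I g"
    and Hf: "\<forall>y\<in>I. - (deriv (deriv f) y + V0 y * f y) = g y"
  shows "- (deriv (deriv (Aop p f)) x + (V0 x + 2 * deriv (deriv (\<lambda>x. ln \<bar>p x\<bar>)) x) * Aop p f x) = Aop p g x"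
proof -
  define w where "w = (\<lambda>y. deriv p y / p y)"
  have sw: "smooth_on I w" unfolding w_def using sm_div[OF I(1) sm_deriv[OF p(1)] p] .
  have lw: "\<forall>y\<in>I. deriv (\<lambda>x. ln \<bar>p x\<bar>) y = w y" using sm_ln_abs(2)[OF I(1) p] by (simp add: w_def)
  have dw: "\<forall>y\<in>I. deriv w y = - V0 y - w y * w y"
  proof
    fix y assume y: "y \<in> I"
    have h: "deriv (deriv p) y = - (V0 y * p y)" using Hp y by fastforce
    have "deriv w y = (deriv (deriv p) y * p y - deriv p y * deriv p y) / (p y)^2"
      unfolding w_def by (rule quot_deriv) (use sm_D0[OF sm_deriv[OF p(1)] y] sm_D0[OF p(1) y] p(2) y in auto)
    then show "deriv w y = - V0 y - w y * w y" using h y p(2) by (simp add: w_def field_simps power2_eq_square)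
  qed
  have Aeq: "Aop p f = (\<lambda>y. deriv f y - w y * f y)" by (simp add: Aop_def w_def fun_eq_iff)
  have Ageq: "Aop p g x = deriv g x - w x * g x" by (simp add: Aop_def w_def)
  have dA: "\<forall>y\<in>I. (deriv (deriv f) y + (V0 y + w y * w y) * f y) - w y * deriv f y = deriv (Aop p f) y"
  proof
    fix y assume y: "y \<in> I"
    have "((\<lambda>y. deriv f y - w y * f y) has_real_derivative
        deriv (deriv f) y - (deriv w y * f y + deriv f y * w y)) (at y)"
      by (rule DERIV_diff[OF sm_DERIV[OF sm_deriv[OF f] y] DERIV_mult[OF sm_DERIV[OF sw y] sm_DERIV[OF f y]]])
    from DERIV_imp_deriv[OF this] show "(deriv (deriv f) y + (V0 y + w y * w y) * f y) - w y * deriv f y = deriv (Aop p f) y"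
      unfolding Aeq using dw y by (simp add: algebra_simps)
  qed
  have e1: "deriv (\<lambda>y. (deriv (deriv f) y + (V0 y + w y * w y) * f y) - w y * deriv f y) x = deriv (deriv (Aop p f)) x"
    by (rule deriv_loc[OF I(1) dA I(2)])
  have dB: "((\<lambda>y. (deriv (deriv f) y + (V0 y + w y * w y) * f y) - w y * deriv f y) has_real_derivative
     (deriv (deriv (deriv f)) x + ((deriv V0 x + (deriv w x * w x + deriv w x * w x)) * f x + deriv f x * (V0 x + w x * w x)))
       - (deriv w x * deriv f x + deriv (deriv f) x * w x)) (at x)"
    by (rule DERIV_diff[OF DERIV_add[OF sm_DERIV[OF sm_deriv[OF sm_deriv[OF f]] I(2)]
          DERIV_mult[OF DERIV_add[OF sm_DERIV[OF V0 I(2)] DERIV_mult[OF sm_DERIV[OF sw I(2)] sm_DERIV[OF sw I(2)]]] sm_DERIV[OF f I(2)]]]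
          DERIV_mult[OF sm_DERIV[OF sw I(2)] sm_DERIV[OF sm_deriv[OF f] I(2)]]])
  have f2eq: "\<forall>y\<in>I. - (V0 y * f y) - g y = deriv (deriv f) y" using Hf by fastforce
  have dC: "((\<lambda>y. - (V0 y * f y) - g y) has_real_derivative - (deriv V0 x * f x + deriv f x * V0 x) - deriv g x) (at x)"
    by (rule DERIV_diff[OF DERIV_minus[OF DERIV_mult[OF sm_DERIV[OF V0 I(2)] sm_DERIV[OF f I(2)]]] sm_DERIV[OF g I(2)]])
  have e3: "deriv (deriv (deriv f)) x = - (deriv V0 x * f x + deriv f x * V0 x) - deriv g x"
    using deriv_loc[OF I(1) f2eq I(2)] DERIV_imp_deriv[OF dC] by simp
  have e4: "deriv (deriv (\<lambda>x. ln \<bar>p x\<bar>)) x = deriv w x" by (rule deriv_loc[OF I(1) lw I(2)])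
  have f2x: "deriv (deriv f) x = - (V0 x * f x) - g x" using f2eq I(2) by simp
  have dwx: "deriv w x = - V0 x - w x * w x" using dw I(2) by simp
  have dd: "deriv (deriv (Aop p f)) x = (deriv (deriv (deriv f)) x + ((deriv V0 x + (deriv w x * w x + deriv w x * w x)) * f x + deriv f x * (V0 x + w x * w x)))
       - (deriv w x * deriv f x + deriv (deriv f) x * w x)"
    using e1 DERIV_imp_deriv[OF dB] by simp
  have Ax: "Aop p f x = deriv f x - w x * f x" by (simp add: Aeq)
  show ?thesis
    unfolding dd Ax e3 e4 Ageq f2x dwx
    by (simp add: algebra_simps)
qed

definition th :: "(nat \<Rightarrow> real \<Rightarrow> real) \<Rightarrow> nat \<Rightarrow> real \<Rightarrow> real" where
  "th \<psi> j = Wr (map \<psi> [1..<j+1])"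

lemma th0: "th \<psi> 0 = (\<lambda>z. 1)"
  by (rule ext) (simp add: th_def Wr_Nil)

lemma th1: "th \<psi> 1 = \<psi> 1"
  by (rule ext) (simp add: th_def Wr_single)

lemma th2: "th \<psi> 2 = (\<lambda>z. \<psi> 1 z * deriv (\<psi> 2) z - \<psi> 2 z * deriv (\<psi> 1) z)"
proof -
  have "[1..<2+1] = [1,2]" by (simp add: upt_rec)
  then show ?thesis by (intro ext) (simp add: th_def Wr_two)
qed

lemma sm_th:
  assumes "open I" "\<And>k. 1 \<le> k \<Longrightarrow> k \<le> j \<Longrightarrow> smooth_on I (\<psi> k)"
  shows "smooth_on I (th \<psi> j)"
  unfolding th_def
proof (rule sm_Wr[OF assms(1)], rule ballI)
  fix f assume "f \<in> set (map \<psi> [1..<j+1])"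
  then obtain k where k: "1 \<le> k" "k \<le> j" "f = \<psi> k" by auto
  then show "smooth_on I f" using assms(2) by simp
qed

lemma dd_loc:
  assumes "open I" "\<forall>x\<in>I. F x = G x" "z \<in> I"
  shows "deriv (deriv F) z = deriv (deriv G) z"
  using DL[OF assms(1,2), of 2] assms(3) by (simp add: numeral_2_eq_2)

lemma dd_add:
  assumes I: "open I" "z \<in> I" and F: "smooth_on I F" and G: "smooth_on I G"
  shows "deriv (deriv (\<lambda>y. F y + G y)) z = deriv (deriv F) z + deriv (deriv G) z"
proof -
  have "\<forall>y\<in>I. deriv (\<lambda>y. F y + G y) y = deriv F y + deriv G y"
  proof
    fix y assume y: "y \<in> I"
    show "deriv (\<lambda>y. F y + G y) y = deriv F y + deriv G y" by (rule deriv_add'[OF sm_D0[OF F y] sm_D0[OF G y]])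
  qed
  from deriv_loc[OF I(1) this I(2)]
  have "deriv (deriv (\<lambda>y. F y + G y)) z = deriv (\<lambda>y. deriv F y + deriv G y) z" .
  also have "\<dots> = deriv (deriv F) z + deriv (deriv G) z"
    by (rule deriv_add') (use sm_D0[OF sm_deriv[OF F] I(2)] sm_D0[OF sm_deriv[OF G] I(2)] in auto)
  finally show ?thesis .
qed

lemma Aop_cmult:
  assumes "open I" "z \<in> I" "smooth_on I h"
  shows "Aop p (\<lambda>y. c * h y) z = c * Aop p h z"
proof -
  have "deriv (\<lambda>y. c * h y) z = c * deriv h z"
    by (rule DERIV_imp_deriv, rule DERIV_cmult, rule sm_DERIV[OF assms(3,2)])
  then show ?thesis by (simp add: Aop_def algebra_simps)
qed

definition hyps :: "real set \<Rightarrow> (real \<Rightarrow> real) \<Rightarrow> (nat \<Rightarrow> real \<Rightarrow> real) \<Rightarrow> (nat \<Rightarrow> real) \<Rightarrow> nat \<Rightarrow> bool" where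
  "hyps I V0 \<psi> C N \<longleftrightarrow> smooth_on I V0 \<and> (\<forall>j. 1 \<le> j \<and> j \<le> N+1 \<longrightarrow> smooth_on I (\<psi> j))
    \<and> (\<forall>z\<in>I. deriv (deriv (\<psi> 1)) z + V0 z * \<psi> 1 z = 0)
    \<and> (\<forall>j. 1 \<le> j \<and> j \<le> N \<longrightarrow> (\<forall>z\<in>I. - (deriv (deriv (\<psi> (j+1))) z + V0 z * \<psi> (j+1) z) = C j * \<psi> j z))
    \<and> (\<forall>j. 1 \<le> j \<and> j \<le> N \<longrightarrow> C j \<noteq> 0)
    \<and> (\<forall>j. 1 \<le> j \<and> j \<le> N+1 \<longrightarrow> (\<forall>z\<in>I. th \<psi> j z \<noteq> 0))"

definition concl :: "real set \<Rightarrow> (real \<Rightarrow> real) \<Rightarrow> (nat \<Rightarrow> real \<Rightarrow> real) \<Rightarrow> (nat \<Rightarrow> real) \<Rightarrow> nat \<Rightarrow> bool" where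
  "concl I V0 \<psi> C n \<longleftrightarrow>
    (\<forall>z\<in>I. deriv (deriv (\<lambda>z. th \<psi> (n+1) z / th \<psi> n z)) z
        + (V0 z + 2 * deriv (deriv (\<lambda>x. ln \<bar>th \<psi> n x\<bar>)) z) * (th \<psi> (n+1) z / th \<psi> n z) = 0)
  \<and> (\<forall>z\<in>I. deriv (deriv (\<lambda>z. th \<psi> (n-1) z / th \<psi> n z)) z
        + (V0 z + 2 * deriv (deriv (\<lambda>x. ln \<bar>th \<psi> n x\<bar>)) z) * (th \<psi> (n-1) z / th \<psi> n z) = 0)
  \<and> (\<forall>z\<in>I. deriv (th \<psi> (n-1)) z * th \<psi> (n+1) z - th \<psi> (n-1) z * deriv (th \<psi> (n+1)) z = C n * (th \<psi> n z)^2)"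

lemma base:
  assumes I: "open I" and H: "hyps I V0 \<psi> C N" and N: "1 \<le> N"
  shows "concl I V0 \<psi> C 1"
proof -
  let ?p = "\<psi> 1"
  have V0: "smooth_on I V0" using H by (simp add: hyps_def)
  have p: "smooth_on I ?p" using H N by (simp add: hyps_def)
  have s2: "smooth_on I (\<psi> 2)" using H N by (auto simp: hyps_def)
  have Hp: "\<forall>z\<in>I. deriv (deriv ?p) z + V0 z * ?p z = 0" using H by (simp add: hyps_def)
  have H2: "\<forall>z\<in>I. - (deriv (deriv (\<psi> 2)) z + V0 z * \<psi> 2 z) = C 1 * ?p z"
    using H N unfolding hyps_def by (metis le_refl one_add_one)
  have pnz: "\<forall>z\<in>I. ?p z \<noteq> 0" using H N th1[of \<psi>] unfolding hyps_def by (metis le_add2 le_refl)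
  let ?T2 = "\<lambda>z. ?p z * deriv (\<psi> 2) z - \<psi> 2 z * deriv ?p z"
  let ?V1 = "\<lambda>z. V0 z + 2 * deriv (deriv (\<lambda>x. ln \<bar>?p x\<bar>)) z"
  have P1: "\<forall>z\<in>I. deriv (deriv (\<lambda>z. ?T2 z / ?p z)) z + ?V1 z * (?T2 z / ?p z) = 0"
  proof
    fix z assume z: "z \<in> I"
    have eq: "\<forall>y\<in>I. ?T2 y / ?p y = Aop ?p (\<psi> 2) y"
      using pnz by (simp add: Aop_def field_simps)
    have g: "smooth_on I (\<lambda>y. C 1 * ?p y)" using sm_cmult[OF I p] .
    have "- (deriv (deriv (Aop ?p (\<psi> 2))) z + ?V1 z * Aop ?p (\<psi> 2) z) = Aop ?p (\<lambda>y. C 1 * ?p y) z"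
      by (rule INT[OF I z V0 p pnz Hp s2 g H2])
    also have "\<dots> = C 1 * Aop ?p ?p z" by (rule Aop_cmult[OF I z p])
    also have "Aop ?p ?p z = 0" using pnz z by (simp add: Aop_def)
    finally show "deriv (deriv (\<lambda>z. ?T2 z / ?p z)) z + ?V1 z * (?T2 z / ?p z) = 0"
      using dd_loc[OF I eq z] eq z by simp
  qed
  have P2: "\<forall>z\<in>I. deriv (deriv (\<lambda>z. 1 / ?p z)) z + ?V1 z * (1 / ?p z) = 0"
  proof
    fix z assume z: "z \<in> I"
    define u where "u = (\<lambda>y. 1 / ?p y)"
    define w where "w = (\<lambda>y. deriv ?p y / ?p y)"
    have su: "smooth_on I u" unfolding u_def by (rule sm_inv[OF I p pnz])
    have du: "\<forall>y\<in>I. - 1 * (deriv ?p y * (u y * u y)) = deriv u y"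
      using inv_deriv[OF sm_D0[OF p]] pnz by (simp add: u_def)
    have "deriv (deriv u) z = deriv (\<lambda>y. - 1 * (deriv ?p y * (u y * u y))) z"
      using deriv_loc[OF I du z] by simp
    also have "\<dots> = - 1 * (deriv (deriv ?p) z * (u z * u z) + (deriv u z * u z + deriv u z * u z) * deriv ?p z)"
      by (rule DERIV_imp_deriv, rule DERIV_cmult,
          rule DERIV_mult[OF sm_DERIV[OF sm_deriv[OF p] z] DERIV_mult[OF sm_DERIV[OF su z] sm_DERIV[OF su z]]])
    finally have e1: "deriv (deriv u) z = - 1 * (deriv (deriv ?p) z * (u z * u z) + (deriv u z * u z + deriv u z * u z) * deriv ?p z)" .
    have e2: "deriv u z = - 1 * (deriv ?p z * (u z * u z))" using du z by simp
    have lw: "\<forall>y\<in>I. deriv (\<lambda>x. ln \<bar>?p x\<bar>) y = w y" using sm_ln_abs(2)[OF I p pnz] by (simp add: w_def)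
    have e3: "deriv (deriv (\<lambda>x. ln \<bar>?p x\<bar>)) z = deriv w z" by (rule deriv_loc[OF I lw z])
    have e4: "deriv w z = (deriv (deriv ?p) z * ?p z - deriv ?p z * deriv ?p z) / (?p z)^2"
      unfolding w_def by (rule quot_deriv) (use sm_D0[OF sm_deriv[OF p] z] sm_D0[OF p z] pnz z in auto)
    have e5: "deriv (deriv ?p) z = - (V0 z * ?p z)" using Hp z by fastforce
    have e6: "u z = 1 / ?p z" by (simp add: u_def)
    have nz: "?p z \<noteq> 0" using pnz z by simp
    have "deriv (deriv u) z + ?V1 z * u z = 0"
      unfolding e1 e2 e3 e4 e5 e6 using nz by (simp add: field_simps power2_eq_square)
    then show "deriv (deriv (\<lambda>z. 1 / ?p z)) z + ?V1 z * (1 / ?p z) = 0" by (simp add: u_def)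
  qed
  have P4: "\<forall>z\<in>I. deriv (\<lambda>z. 1) z * ?T2 z - 1 * deriv ?T2 z = C 1 * (?p z)^2"
  proof
    fix z assume z: "z \<in> I"
    have "deriv ?T2 z = (deriv ?p z * deriv (\<psi> 2) z + deriv (deriv (\<psi> 2)) z * ?p z) - (deriv (\<psi> 2) z * deriv ?p z + deriv (deriv ?p) z * \<psi> 2 z)"
      by (rule DERIV_imp_deriv, rule DERIV_diff[OF DERIV_mult[OF sm_DERIV[OF p z] sm_DERIV[OF sm_deriv[OF s2] z]]
            DERIV_mult[OF sm_DERIV[OF s2 z] sm_DERIV[OF sm_deriv[OF p] z]]])
    moreover have "deriv (deriv ?p) z = - (V0 z * ?p z)" using Hp z by fastforce
    moreover have "deriv (deriv (\<psi> 2)) z = - (V0 z * \<psi> 2 z) - C 1 * ?p z" using H2 z by fastforce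
    moreover have "deriv (\<lambda>z. 1::real) z = 0" by simp
    ultimately show "deriv (\<lambda>z. 1) z * ?T2 z - 1 * deriv ?T2 z = C 1 * (?p z)^2"
      by (simp add: algebra_simps power2_eq_square)
  qed
  have t2: "th \<psi> (1+1) = ?T2" by (simp only: one_add_one th2)
  have t0: "th \<psi> (1-1) = (\<lambda>z. 1)" by (simp only: diff_self_eq_0 th0)
  show ?thesis unfolding concl_def t2 t0 th1 using P1 P2 P4 by simp
qed

lemma newdata:
  assumes I: "open I" and H: "hyps I V0 \<psi> C N" and N: "1 \<le> N"
  shows "hyps I (\<lambda>z. V0 z + 2 * deriv (deriv (\<lambda>x. ln \<bar>\<psi> 1 x\<bar>)) z) (\<lambda>k. Aop (\<psi> 1) (\<psi> (k+1))) (\<lambda>k. C (k+1)) (N - 1)"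
    and "\<forall>j\<le>N. \<forall>z\<in>I. th \<psi> (j+1) z = \<psi> 1 z * th (\<lambda>k. Aop (\<psi> 1) (\<psi> (k+1))) j z"
proof -
  let ?p = "\<psi> 1"
  let ?\<psi>' = "\<lambda>k. Aop (\<psi> 1) (\<psi> (k+1))"
  let ?V1 = "\<lambda>z. V0 z + 2 * deriv (deriv (\<lambda>x. ln \<bar>\<psi> 1 x\<bar>)) z"
  have V0: "smooth_on I V0" using H by (simp add: hyps_def)
  have s\<psi>: "\<And>k. 1 \<le> k \<Longrightarrow> k \<le> N+1 \<Longrightarrow> smooth_on I (\<psi> k)" using H by (simp add: hyps_def)
  have p: "smooth_on I ?p" using s\<psi>[of 1] by simp
  have Hp: "\<forall>z\<in>I. deriv (deriv ?p) z + V0 z * ?p z = 0" using H by (simp add: hyps_def)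
  have Hj: "\<And>j z. 1 \<le> j \<Longrightarrow> j \<le> N \<Longrightarrow> z \<in> I \<Longrightarrow> - (deriv (deriv (\<psi> (j+1))) z + V0 z * \<psi> (j+1) z) = C j * \<psi> j z"
    using H unfolding hyps_def by blast
  have Cnz: "\<And>j. 1 \<le> j \<Longrightarrow> j \<le> N \<Longrightarrow> C j \<noteq> 0" using H unfolding hyps_def by blast
  have thnz: "\<And>j z. 1 \<le> j \<Longrightarrow> j \<le> N+1 \<Longrightarrow> z \<in> I \<Longrightarrow> th \<psi> j z \<noteq> 0" using H unfolding hyps_def by blast
  have pnz: "\<forall>z\<in>I. ?p z \<noteq> 0" using thnz[of 1] th1[of \<psi>] by simp
  show TH: "\<forall>j\<le>N. \<forall>z\<in>I. th \<psi> (j+1) z = ?p z * th ?\<psi>' j z"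
  proof (intro allI impI ballI)
    fix j z assume j: "j \<le> N" and z: "z \<in> I"
    have l1: "map \<psi> [1..<j+1+1] = ?p # map \<psi> [2..<j+2]" by (simp del: upt_Suc add: upt_conv_Cons numeral_2_eq_2)
    have "[2..<j+2] = map Suc [1..<j+1]" by (simp del: upt_Suc add: map_Suc_upt numeral_2_eq_2)
    then have l2: "map (\<lambda>g x. deriv g x - deriv ?p x / ?p x * g x) (map \<psi> [2..<j+2]) = map ?\<psi>' [1..<j+1]"
      by (simp add: Aop_def)
    have gs: "\<forall>g\<in>set (map \<psi> [2..<j+2]). smooth_on I g" using s\<psi> j by auto
    show "th \<psi> (j+1) z = ?p z * th ?\<psi>' j z"
      unfolding th_def l1 using Wr_crum[OF I z p pnz gs] l2 by simp
  qed
  have s1: "smooth_on I ?V1"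
    using sm_add[OF I V0 sm_cmult[OF I sm_deriv[OF sm_deriv[OF sm_ln_abs(1)[OF I p pnz]]]]] .
  have s2: "\<forall>j. 1 \<le> j \<and> j \<le> N - 1 + 1 \<longrightarrow> smooth_on I (?\<psi>' j)"
    using sm_Aop[OF I p pnz] s\<psi> N by simp
  have h1: "\<forall>z\<in>I. deriv (deriv (?\<psi>' 1)) z + ?V1 z * ?\<psi>' 1 z = 0"
  proof
    fix z assume z: "z \<in> I"
    have g: "smooth_on I (\<lambda>y. C 1 * ?p y)" using sm_cmult[OF I p] .
    have H2: "\<forall>y\<in>I. - (deriv (deriv (\<psi> 2)) y + V0 y * \<psi> 2 y) = C 1 * ?p y"
      using Hj[of 1] N by (simp add: numeral_2_eq_2)
    have s2': "smooth_on I (\<psi> 2)" using s\<psi>[of 2] N by simp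
    have "- (deriv (deriv (Aop ?p (\<psi> 2))) z + ?V1 z * Aop ?p (\<psi> 2) z) = Aop ?p (\<lambda>y. C 1 * ?p y) z"
      by (rule INT[OF I z V0 p pnz Hp s2' g H2])
    also have "\<dots> = C 1 * Aop ?p ?p z" by (rule Aop_cmult[OF I z p])
    also have "Aop ?p ?p z = 0" using pnz z by (simp add: Aop_def)
    finally show "deriv (deriv (?\<psi>' 1)) z + ?V1 z * ?\<psi>' 1 z = 0" by (simp add: numeral_2_eq_2)
  qed
  have h2: "\<forall>j. 1 \<le> j \<and> j \<le> N - 1 \<longrightarrow> (\<forall>z\<in>I. - (deriv (deriv (?\<psi>' (j+1))) z + ?V1 z * ?\<psi>' (j+1) z) = C (j+1) * ?\<psi>' j z)"
  proof (intro allI impI ballI)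
    fix j z assume j: "1 \<le> j \<and> j \<le> N - 1" and z: "z \<in> I"
    have jN: "j + 1 \<le> N" "1 \<le> j+1" "j+1+1 \<le> N+1" "j+1 \<le> N+1" using j N by linarith+
    have f: "smooth_on I (\<psi> (j+1+1))" using s\<psi>[OF _ jN(3)] by simp
    have sj: "smooth_on I (\<psi> (j+1))" using s\<psi>[OF jN(2) jN(4)] .
    have g: "smooth_on I (\<lambda>y. C (j+1) * \<psi> (j+1) y)" using sm_cmult[OF I sj] .
    have Hf: "\<forall>y\<in>I. - (deriv (deriv (\<psi> (j+1+1))) y + V0 y * \<psi> (j+1+1) y) = C (j+1) * \<psi> (j+1) y"
      using Hj[OF jN(2) jN(1)] by blast
    have "- (deriv (deriv (Aop ?p (\<psi> (j+1+1)))) z + ?V1 z * Aop ?p (\<psi> (j+1+1)) z) = Aop ?p (\<lambda>y. C (j+1) * \<psi> (j+1) y) z"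
      by (rule INT[OF I z V0 p pnz Hp f g Hf])
    also have "\<dots> = C (j+1) * Aop ?p (\<psi> (j+1)) z" by (rule Aop_cmult[OF I z sj])
    finally show "- (deriv (deriv (?\<psi>' (j+1))) z + ?V1 z * ?\<psi>' (j+1) z) = C (j+1) * ?\<psi>' j z" by simp
  qed
  have h3: "\<forall>j. 1 \<le> j \<and> j \<le> N - 1 \<longrightarrow> C (j+1) \<noteq> 0"
  proof (intro allI impI)
    fix j assume "1 \<le> j \<and> j \<le> N - 1"
    then have "1 \<le> j+1" "j + 1 \<le> N" using N by linarith+
    then show "C (j+1) \<noteq> 0" using Cnz by blast
  qed
  have h4: "\<forall>j. 1 \<le> j \<and> j \<le> N - 1 + 1 \<longrightarrow> (\<forall>z\<in>I. th ?\<psi>' j z \<noteq> 0)"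
  proof (intro allI impI ballI)
    fix j z assume j: "1 \<le> j \<and> j \<le> N - 1 + 1" and z: "z \<in> I"
    have jN: "j \<le> N" "1 \<le> j+1" "j+1 \<le> N+1" using j N by linarith+
    have "th \<psi> (j+1) z = ?p z * th ?\<psi>' j z" using TH jN z by blast
    moreover have "th \<psi> (j+1) z \<noteq> 0" using thnz[OF jN(2,3) z] .
    ultimately show "th ?\<psi>' j z \<noteq> 0" by simp
  qed
  show "hyps I ?V1 ?\<psi>' (\<lambda>k. C (k+1)) (N - 1)"
    unfolding hyps_def using s1 s2 h1 h2 h3 h4 by blast
qed

lemma step:
  assumes I: "open I" and H: "hyps I V0 \<psi> C N" and n: "1 \<le> n" "n + 1 \<le> N"
    and IH: "concl I (\<lambda>z. V0 z + 2 * deriv (deriv (\<lambda>x. ln \<bar>\<psi> 1 x\<bar>)) z) (\<lambda>k. Aop (\<psi> 1) (\<psi> (k+1))) (\<lambda>k. C (k+1)) n"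
  shows "concl I V0 \<psi> C (n+1)"
proof -
  let ?p = "\<psi> 1"
  let ?\<psi>' = "\<lambda>k. Aop (\<psi> 1) (\<psi> (k+1))"
  let ?S = "th ?\<psi>'"
  let ?T = "th \<psi>"
  have N: "1 \<le> N" using n by simp
  have TH: "\<forall>j\<le>N. \<forall>z\<in>I. ?T (j+1) z = ?p z * ?S j z" using newdata(2)[OF I H N] .
  have HN: "hyps I (\<lambda>z. V0 z + 2 * deriv (deriv (\<lambda>x. ln \<bar>\<psi> 1 x\<bar>)) z) ?\<psi>' (\<lambda>k. C (k+1)) (N - 1)"
    using newdata(1)[OF I H N] .
  have s\<psi>': "\<And>k. 1 \<le> k \<Longrightarrow> k \<le> N \<Longrightarrow> smooth_on I (?\<psi>' k)"
    using HN N unfolding hyps_def by simp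
  have sS: "\<And>j. j \<le> N \<Longrightarrow> smooth_on I (?S j)"
    by (rule sm_th[OF I]) (use s\<psi>' in auto)
  have Snz: "\<And>j. 1 \<le> j \<Longrightarrow> j \<le> N \<Longrightarrow> \<forall>z\<in>I. ?S j z \<noteq> 0"
    using HN N unfolding hyps_def by simp
  have p: "smooth_on I ?p" using H N by (simp add: hyps_def)
  have pnz: "\<forall>z\<in>I. ?p z \<noteq> 0" using H th1[of \<psi>] unfolding hyps_def by (metis le_add2 le_refl)
  have n1: "n - 1 \<le> N" "n - 1 + 1 = n" "n \<le> N" "n + 1 \<le> N" using n by auto
  have Tn: "\<forall>y\<in>I. ?T n y = ?p y * ?S (n-1) y" using TH n1(1) n1(2) by metis
  have Tn1: "\<forall>y\<in>I. ?T (n+1) y = ?p y * ?S n y" using TH n1(3) by blast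
  have Tn2: "\<forall>y\<in>I. ?T (n+1+1) y = ?p y * ?S (n+1) y" using TH n1(4) by blast
  have Snnz: "\<forall>z\<in>I. ?S n z \<noteq> 0" using Snz[OF n(1) n1(3)] .
  have sLp: "smooth_on I (\<lambda>x. ln \<bar>?p x\<bar>)" using sm_ln_abs(1)[OF I p pnz] .
  have sLS: "smooth_on I (\<lambda>x. ln \<bar>?S n x\<bar>)" using sm_ln_abs(1)[OF I sS[OF n1(3)] Snnz] .
  have LN: "\<forall>z\<in>I. deriv (deriv (\<lambda>x. ln \<bar>?T (n+1) x\<bar>)) z
      = deriv (deriv (\<lambda>x. ln \<bar>?p x\<bar>)) z + deriv (deriv (\<lambda>x. ln \<bar>?S n x\<bar>)) z"
  proof
    fix z assume z: "z \<in> I"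
    have "\<forall>y\<in>I. ln \<bar>?T (n+1) y\<bar> = ln \<bar>?p y\<bar> + ln \<bar>?S n y\<bar>"
      using Tn1 pnz Snnz by (simp add: abs_mult ln_mult)
    from dd_loc[OF I this z]
    show "deriv (deriv (\<lambda>x. ln \<bar>?T (n+1) x\<bar>)) z
      = deriv (deriv (\<lambda>x. ln \<bar>?p x\<bar>)) z + deriv (deriv (\<lambda>x. ln \<bar>?S n x\<bar>)) z"
      using dd_add[OF I z sLp sLS] by simp
  qed
  have IH1: "\<forall>z\<in>I. deriv (deriv (\<lambda>z. ?S (n+1) z / ?S n z)) z
        + ((V0 z + 2 * deriv (deriv (\<lambda>x. ln \<bar>?p x\<bar>)) z) + 2 * deriv (deriv (\<lambda>x. ln \<bar>?S n x\<bar>)) z) * (?S (n+1) z / ?S n z) = 0"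
    using IH unfolding concl_def by blast
  have IH2: "\<forall>z\<in>I. deriv (deriv (\<lambda>z. ?S (n-1) z / ?S n z)) z
        + ((V0 z + 2 * deriv (deriv (\<lambda>x. ln \<bar>?p x\<bar>)) z) + 2 * deriv (deriv (\<lambda>x. ln \<bar>?S n x\<bar>)) z) * (?S (n-1) z / ?S n z) = 0"
    using IH unfolding concl_def by blast
  have IH4: "\<forall>z\<in>I. deriv (?S (n-1)) z * ?S (n+1) z - ?S (n-1) z * deriv (?S (n+1)) z = C (n+1) * (?S n z)^2"
    using IH unfolding concl_def by blast
  have P1: "\<forall>z\<in>I. deriv (deriv (\<lambda>z. ?T (n+1+1) z / ?T (n+1) z)) z
        + (V0 z + 2 * deriv (deriv (\<lambda>x. ln \<bar>?T (n+1) x\<bar>)) z) * (?T (n+1+1) z / ?T (n+1) z) = 0"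
  proof
    fix z assume z: "z \<in> I"
    have eq: "\<forall>y\<in>I. ?T (n+1+1) y / ?T (n+1) y = ?S (n+1) y / ?S n y"
      using Tn1 Tn2 pnz by simp
    show "deriv (deriv (\<lambda>z. ?T (n+1+1) z / ?T (n+1) z)) z
        + (V0 z + 2 * deriv (deriv (\<lambda>x. ln \<bar>?T (n+1) x\<bar>)) z) * (?T (n+1+1) z / ?T (n+1) z) = 0"
      unfolding dd_loc[OF I eq z] LN[rule_format, OF z] using eq z IH1 by (simp add: algebra_simps)
  qed
  have P2: "\<forall>z\<in>I. deriv (deriv (\<lambda>z. ?T n z / ?T (n+1) z)) z
        + (V0 z + 2 * deriv (deriv (\<lambda>x. ln \<bar>?T (n+1) x\<bar>)) z) * (?T n z / ?T (n+1) z) = 0"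
  proof
    fix z assume z: "z \<in> I"
    have eq: "\<forall>y\<in>I. ?T n y / ?T (n+1) y = ?S (n-1) y / ?S n y"
      using Tn Tn1 pnz by simp
    show "deriv (deriv (\<lambda>z. ?T n z / ?T (n+1) z)) z
        + (V0 z + 2 * deriv (deriv (\<lambda>x. ln \<bar>?T (n+1) x\<bar>)) z) * (?T n z / ?T (n+1) z) = 0"
      unfolding dd_loc[OF I eq z] LN[rule_format, OF z] using eq z IH2 by (simp add: algebra_simps)
  qed
  have P4: "\<forall>z\<in>I. deriv (?T n) z * ?T (n+1+1) z - ?T n z * deriv (?T (n+1+1)) z = C (n+1) * (?T (n+1) z)^2"
  proof
    fix z assume z: "z \<in> I"
    have sA: "smooth_on I (?S (n-1))" using sS n1(1) by simp
    have sB: "smooth_on I (?S (n+1))" using sS n1(4) by simp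
    have dA: "deriv (?T n) z = deriv ?p z * ?S (n-1) z + ?p z * deriv (?S (n-1)) z"
      using deriv_loc[OF I Tn z] deriv_mult'[OF sm_D0[OF p z] sm_D0[OF sA z]] by simp
    have dB: "deriv (?T (n+1+1)) z = deriv ?p z * ?S (n+1) z + ?p z * deriv (?S (n+1)) z"
      using deriv_loc[OF I Tn2 z] deriv_mult'[OF sm_D0[OF p z] sm_D0[OF sB z]] by simp
    have "deriv (?T n) z * ?T (n+1+1) z - ?T n z * deriv (?T (n+1+1)) z
       = (?p z)^2 * (deriv (?S (n-1)) z * ?S (n+1) z - ?S (n-1) z * deriv (?S (n+1)) z)"
      unfolding dA dB using Tn Tn2 z by (simp add: algebra_simps power2_eq_square)
    also have "\<dots> = C (n+1) * (?T (n+1) z)^2" using IH4 z Tn1 by (simp add: algebra_simps power2_eq_square)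
    finally show "deriv (?T n) z * ?T (n+1+1) z - ?T n z * deriv (?T (n+1+1)) z = C (n+1) * (?T (n+1) z)^2" .
  qed
  have e: "n + 1 - 1 = n" by simp
  show ?thesis unfolding concl_def e using P1 P2 P4 by blast
qed

lemma main:
  assumes I: "open I"
  shows "hyps I V0 \<psi> C N \<Longrightarrow> 1 \<le> n \<Longrightarrow> n \<le> N \<Longrightarrow> concl I V0 \<psi> C n"
proof (induction n arbitrary: V0 \<psi> C N)
  case 0 then show ?case by simp
next
  case (Suc n)
  show ?case
  proof (cases "n = 0")
    case True then show ?thesis using base[OF I Suc.prems(1)] Suc.prems(3) by simp
  next
    case False
    then have n1: "1 \<le> n" by simp
    have N: "1 \<le> N" using Suc.prems by simp
    have "concl I (\<lambda>z. V0 z + 2 * deriv (deriv (\<lambda>x. ln \<bar>\<psi> 1 x\<bar>)) z) (\<lambda>k. Aop (\<psi> 1) (\<psi> (k+1))) (\<lambda>k. C (k+1)) n"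
      by (rule Suc.IH[OF newdata(1)[OF I Suc.prems(1) N] n1]) (use Suc.prems(3) in simp)
    from step[OF I Suc.prems(1) n1 _ this] Suc.prems(3) show ?thesis by simp
  qed
qed

theorem mainTheorem14:
  fixes I :: "real set" and V0 :: "real \<Rightarrow> real" and \<psi> :: "nat \<Rightarrow> real \<Rightarrow> real"
    and C :: "nat \<Rightarrow> real" and N :: nat and \<theta> :: "nat \<Rightarrow> real \<Rightarrow> real"
  assumes I: "is_interval I" "open I"
    and V0: "smooth_on I V0"
    and \<psi>_smooth: "\<And>j. 1 \<le> j \<Longrightarrow> j \<le> N + 1 \<Longrightarrow> smooth_on I (\<psi> j)"
    and H1: "\<And>z. z \<in> I \<Longrightarrow> - (deriv (deriv (\<psi> 1)) z + V0 z * \<psi> 1 z) = 0"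
    and Hj: "\<And>j z. 1 \<le> j \<Longrightarrow> j \<le> N \<Longrightarrow> z \<in> I \<Longrightarrow>
               - (deriv (deriv (\<psi> (j+1))) z + V0 z * \<psi> (j+1) z) = C j * \<psi> j z"
    and C: "\<And>j. 1 \<le> j \<Longrightarrow> j \<le> N \<Longrightarrow> C j \<noteq> 0"
    and \<theta>_def: "\<And>j. \<theta> j = Wr (map \<psi> [1..<j+1])"
    and \<theta>_nz: "\<And>j z. 1 \<le> j \<Longrightarrow> j \<le> N + 1 \<Longrightarrow> z \<in> I \<Longrightarrow> \<theta> j z \<noteq> 0"
    and n: "1 \<le> n" "n \<le> N"
  shows "let V = (\<lambda>z. V0 z + 2 * deriv (deriv (\<lambda>x. ln \<bar>\<theta> n x\<bar>)) z);
             \<phi> = (\<lambda>z. \<theta> (n+1) z / \<theta> n z);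
             \<phi>inv = (\<lambda>z. \<theta> (n-1) z / \<theta> n z)
         in (\<forall>z\<in>I. deriv (deriv \<phi>) z + V z * \<phi> z = 0)
          \<and> (\<forall>z\<in>I. deriv (deriv \<phi>inv) z + V z * \<phi>inv z = 0)
          \<and> (\<forall>z\<in>I. Wr [\<phi>, \<phi>inv] z = C n)
          \<and> (\<forall>z\<in>I. deriv (\<theta> (n-1)) z * \<theta> (n+1) z - \<theta> (n-1) z * deriv (\<theta> (n+1)) z
                    = C n * (\<theta> n z)^2)"
proof -
  have \<theta>eq: "\<theta> = th \<psi>" by (rule ext) (simp add: \<theta>_def th_def)
  have H1': "\<forall>z\<in>I. deriv (deriv (\<psi> 1)) z + V0 z * \<psi> 1 z = 0"
  proof
    fix z assume "z \<in> I"
    then have "- (deriv (deriv (\<psi> 1)) z + V0 z * \<psi> 1 z) = 0" by (rule H1)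
    then show "deriv (deriv (\<psi> 1)) z + V0 z * \<psi> 1 z = 0" by simp
  qed
  have Hy: "hyps I V0 \<psi> C N"
    unfolding hyps_def \<theta>eq[symmetric]
  proof (intro conjI)
    show "\<forall>j. 1 \<le> j \<and> j \<le> N + 1 \<longrightarrow> smooth_on I (\<psi> j)" using \<psi>_smooth by blast
    show "\<forall>j. 1 \<le> j \<and> j \<le> N \<longrightarrow> (\<forall>z\<in>I. - (deriv (deriv (\<psi> (j + 1))) z + V0 z * \<psi> (j + 1) z) = C j * \<psi> j z)"
      using Hj by blast
    show "\<forall>j. 1 \<le> j \<and> j \<le> N \<longrightarrow> C j \<noteq> 0" using C by blast
    show "\<forall>j. 1 \<le> j \<and> j \<le> N + 1 \<longrightarrow> (\<forall>z\<in>I. \<theta> j z \<noteq> 0)" using \<theta>_nz by blast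
  qed (use V0 H1' in auto)
  have M: "concl I V0 \<psi> C n" by (rule main[OF I(2) Hy n])
  have P1: "\<forall>z\<in>I. deriv (deriv (\<lambda>z. \<theta> (n+1) z / \<theta> n z)) z
        + (V0 z + 2 * deriv (deriv (\<lambda>x. ln \<bar>\<theta> n x\<bar>)) z) * (\<theta> (n+1) z / \<theta> n z) = 0"
    using M unfolding concl_def \<theta>eq by blast
  have P2: "\<forall>z\<in>I. deriv (deriv (\<lambda>z. \<theta> (n-1) z / \<theta> n z)) z
        + (V0 z + 2 * deriv (deriv (\<lambda>x. ln \<bar>\<theta> n x\<bar>)) z) * (\<theta> (n-1) z / \<theta> n z) = 0"
    using M unfolding concl_def \<theta>eq by blast
  have P4: "\<forall>z\<in>I. deriv (\<theta> (n-1)) z * \<theta> (n+1) z - \<theta> (n-1) z * deriv (\<theta> (n+1)) z = C n * (\<theta> n z)^2"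
    using M unfolding concl_def \<theta>eq by blast
  have s\<theta>: "\<And>j. j \<le> N + 1 \<Longrightarrow> smooth_on I (\<theta> j)"
    unfolding \<theta>eq by (rule sm_th[OF I(2)]) (use \<psi>_smooth in auto)
  have P3: "\<forall>z\<in>I. Wr [\<lambda>z. \<theta> (n+1) z / \<theta> n z, \<lambda>z. \<theta> (n-1) z / \<theta> n z] z = C n"
  proof
    fix z assume z: "z \<in> I"
    have da: "\<theta> (n-1) differentiable at z" using sm_D0[OF s\<theta> z] n by simp
    have db: "\<theta> n differentiable at z" using sm_D0[OF s\<theta> z] n by simp
    have dc: "\<theta> (n+1) differentiable at z" using sm_D0[OF s\<theta> z] n by simp
    have bnz: "\<theta> n z \<noteq> 0" using \<theta>_nz n z by simp
    have q1: "deriv (\<lambda>z. \<theta> (n+1) z / \<theta> n z) z = (deriv (\<theta> (n+1)) z * \<theta> n z - \<theta> (n+1) z * deriv (\<theta> n) z) / (\<theta> n z)^2"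
      by (rule quot_deriv[OF dc db bnz])
    have q2: "deriv (\<lambda>z. \<theta> (n-1) z / \<theta> n z) z = (deriv (\<theta> (n-1)) z * \<theta> n z - \<theta> (n-1) z * deriv (\<theta> n) z) / (\<theta> n z)^2"
      by (rule quot_deriv[OF da db bnz])
    have "Wr [\<lambda>z. \<theta> (n+1) z / \<theta> n z, \<lambda>z. \<theta> (n-1) z / \<theta> n z] z
       = (deriv (\<theta> (n-1)) z * \<theta> (n+1) z - \<theta> (n-1) z * deriv (\<theta> (n+1)) z) / (\<theta> n z)^2"
      unfolding Wr_two q1 q2 using bnz by (simp add: field_simps power2_eq_square)
    also have "\<dots> = C n" using P4 z bnz by simp
    finally show "Wr [\<lambda>z. \<theta> (n+1) z / \<theta> n z, \<lambda>z. \<theta> (n-1) z / \<theta> n z] z = C n" .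
  qed
  show ?thesis unfolding Let_def using P1 P2 P3 P4 by blast
qed

end
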